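(* Let $k\ge 2$ and let $P=(p_1,\dots,p_k)$ and $Q=(q_1,\dots,q_k)$ be two multinomial (categorical) probability distributions over the same index set $\{1,\dots,k\}$. Suppose the indices of the largest probabilities of $P$ and $Q$ do not match, i.e. $\arg\max_i p_i \neq \arg\max_j q_j$. Then $$d_{\chi^2}(Q,P)\;\ge\; \frac{(p_{(1)}-p_{(2)})^2}{(p_{(1)}+p_{(2)})-(p_{(1)}-p_{(2)})^2},$$ where $p_{(1)}$ and $p_{(2)}$ denote the first and second largest probabilities among $p_1,\dots,p_k$.
   Context: The chi-squared distance is $d_{\chi^2}(Q,P)=\sum_{i=1}^k\frac{(q_i-p_i)^2}{p_i}=\sum_{i=1}^k\frac{q_i^2}{p_i}-1$ (taken to be $+\infty$ if some $q_i>0=p_i$). *)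

theory Defs
  imports Complex_Main "HOL-Library.Extended_Real"
begin

definition is_distribution :: "nat \<Rightarrow> (nat \<Rightarrow> real) \<Rightarrow> bool" where
  "is_distribution k p \<longleftrightarrow> (\<forall>i\<in>{1..k}. 0 \<le> p i) \<and> (\<Sum>i=1..k. p i) = 1"

definition chi2_dist :: "nat \<Rightarrow> (nat \<Rightarrow> real) \<Rightarrow> (nat \<Rightarrow> real) \<Rightarrow> ereal" where
  "chi2_dist k q p =
     (if \<exists>i\<in>{1..k}. q i > 0 \<and> p i = 0 then \<infinity>
      else ereal (\<Sum>i\<in>{i\<in>{1..k}. p i \<noteq> 0}. (q i - p i)^2 / p i))"

definition argmax_set :: "nat \<Rightarrow> (nat \<Rightarrow> real) \<Rightarrow> nat set" where
  "argmax_set k p = {i\<in>{1..k}. \<forall>j\<in>{1..k}. p j \<le> p i}"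

text \<open>Order statistics: m-th largest value (m = 1, 2, ...) among p_1..p_k,
  counted with multiplicity.\<close>
definition order_stat :: "nat \<Rightarrow> (nat \<Rightarrow> real) \<Rightarrow> nat \<Rightarrow> real" where
  "order_stat k p m = rev (sort (map p [1..<k+1])) ! (m - 1)"

text \<open>The right-hand side a^2/b as an extended real, with a^2/0 = +infinity
  (only occurs for a point mass P, where the numerator is 1).\<close>
definition ediv :: "real \<Rightarrow> real \<Rightarrow> ereal" where
  "ediv a b = (if b = 0 then (if a = 0 then 0 else \<infinity>) else ereal (a / b))"

end

theory Submission
  imports Defs
begin

lemma os_facts:
  fixes k :: nat and p :: "nat \<Rightarrow> real"
  assumes k: "k \<ge> 2" and i: "i \<in> argmax_set k p" and j: "j \<in> {1..k}" and ij: "j \<noteq> i"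
  shows "order_stat k p 1 = p i" "order_stat k p 2 \<le> order_stat k p 1" "p j \<le> order_stat k p 2"
proof -
  define L where "L = map p [1..<k+1]"
  define ys where "ys = sort L"
  have len: "length ys = k" by (simp add: ys_def L_def)
  have srt: "sorted ys" by (simp add: ys_def)
  have setys: "set ys = p ` {1..k}" by (auto simp: ys_def L_def)
  have os: "order_stat k p m = rev ys ! (m-1)" for m
    unfolding order_stat_def ys_def L_def by (rule refl)
  have o1: "order_stat k p 1 = ys ! (k-1)"
    using k by (simp add: os rev_nth len)
  have o2: "order_stat k p 2 = ys ! (k-2)"
    using k by (simp add: os rev_nth len numeral_2_eq_2 Suc_diff_Suc)
  have imax: "i \<in> {1..k}" "\<And>l. l \<in> {1..k} \<Longrightarrow> p l \<le> p i" using i by (auto simp: argmax_set_def)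
  have "p i \<in> set ys" using imax setys by auto
  then obtain t where t: "t < k" "ys ! t = p i" using len by (metis in_set_conv_nth)
  have "ys ! t \<le> ys ! (k-1)" using srt t len by (intro sorted_nth_mono) auto
  moreover have "ys ! (k-1) \<in> set ys" using len k by auto
  hence "ys ! (k-1) \<le> p i" using setys imax by auto
  ultimately show A: "order_stat k p 1 = p i" using o1 t by auto
  show "order_stat k p 2 \<le> order_stat k p 1" using o1 o2 srt len k by (auto intro: sorted_nth_mono)
  show "p j \<le> order_stat k p 2"
  proof (rule ccontr)
    assume "\<not> ?thesis"
    hence lt: "ys ! (k-2) < p j" using o2 by simp
    define P where "P = (\<lambda>v. p j \<le> v)"
    have "{n. n < length ys \<and> P (ys ! n)} \<subseteq> {k-1}"
    proof
      fix n assume "n \<in> {n. n < length ys \<and> P (ys ! n)}"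
      hence n: "n < k" "p j \<le> ys ! n" using len P_def by auto
      show "n \<in> {k-1}"
      proof (rule ccontr)
        assume "n \<notin> {k-1}"
        hence "n \<le> k-2" using n by auto
        hence "ys ! n \<le> ys ! (k-2)" using srt len k by (intro sorted_nth_mono) auto
        thus False using n lt by auto
      qed
    qed
    hence "card {n. n < length ys \<and> P (ys ! n)} \<le> 1"
      using card_mono[of "{k-1}"] by fastforce
    hence c1: "length (filter P ys) \<le> 1" by (simp add: length_filter_conv_card)
    have "length (filter P ys) = length (filter P L)" by (simp add: ys_def filter_sort)
    also have "filter P L = map p (filter (P \<circ> p) [1..<k+1])" by (simp add: L_def filter_map)
    also have "length \<dots> = card ({x. (P \<circ> p) x} \<inter> set [1..<k+1])"
      by (simp add: distinct_length_filter)
    also have "{i, j} \<subseteq> {x. (P \<circ> p) x} \<inter> set [1..<k+1]"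
      using imax j P_def by auto
    hence "card {i,j} \<le> card ({x. (P \<circ> p) x} \<inter> set [1..<k+1])"
      by (intro card_mono) auto
    ultimately show False using c1 ij by auto
  qed
qed

theorem mainTheorem3:
  fixes k :: nat and p q :: "nat \<Rightarrow> real"
  assumes "k \<ge> 2"
    and "is_distribution k p" and "is_distribution k q"
    and "\<exists>i\<in>argmax_set k p. \<exists>j\<in>argmax_set k q. i \<noteq> j"
  shows "chi2_dist k q p \<ge>
           ediv ((order_stat k p 1 - order_stat k p 2)^2)
                ((order_stat k p 1 + order_stat k p 2) - (order_stat k p 1 - order_stat k p 2)^2)"
proof -
  obtain i j where i: "i \<in> argmax_set k p" and j: "j \<in> argmax_set k q" and ij: "i \<noteq> j"
    using assms(4) by blast
  have i1: "i \<in> {1..k}" and j1: "j \<in> {1..k}" using i j by (auto simp: argmax_set_def)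
  have pmax: "\<And>l. l \<in> {1..k} \<Longrightarrow> p l \<le> p i" using i by (auto simp: argmax_set_def)
  have qmax: "\<And>l. l \<in> {1..k} \<Longrightarrow> q l \<le> q j" using j by (auto simp: argmax_set_def)
  have pnn: "\<And>l. l \<in> {1..k} \<Longrightarrow> 0 \<le> p l" and ps: "(\<Sum>l=1..k. p l) = 1"
    using assms(2) by (auto simp: is_distribution_def)
  have qnn: "\<And>l. l \<in> {1..k} \<Longrightarrow> 0 \<le> q l" and qs: "(\<Sum>l=1..k. q l) = 1"
    using assms(3) by (auto simp: is_distribution_def)
  define a where "a = order_stat k p 1"
  define b where "b = order_stat k p 2"
  have a: "a = p i" and ba: "b \<le> a" and jb: "p j \<le> b"
    using os_facts[OF assms(1) i j1] ij unfolding a_def b_def by auto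
  have qjpos: "q j > 0"
  proof (rule ccontr)
    assume "\<not> ?thesis"
    hence "(\<Sum>l=1..k. q l) \<le> (\<Sum>l=1..k. 0)" using qmax by (intro sum_mono) force
    thus False using qs by simp
  qed
  have a1: "a \<le> 1" unfolding a using ps pnn i1 member_le_sum[of i "{1..k}" p] by auto
  have d0nn: "0 \<le> a - b" using ba by simp
  show ?thesis
  proof (cases "\<exists>l\<in>{1..k}. q l > 0 \<and> p l = 0")
    case True thus ?thesis by (simp add: chi2_dist_def)
  next
    case False
    define S where "S = {l\<in>{1..k}. p l \<noteq> 0}"
    define C where "C = (\<Sum>l\<in>S. (q l - p l)^2 / p l)"
    have chi: "chi2_dist k q p = ereal C" using False by (simp add: chi2_dist_def C_def S_def)
    have finS: "finite S" by (simp add: S_def)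
    have Spos: "\<And>l. l \<in> S \<Longrightarrow> p l > 0" using pnn by (force simp: S_def)
    have cpos: "p j > 0" using False qjpos j1 pnn[OF j1] by force
    have jS: "j \<in> S" and iS: "i \<in> S" using cpos j1 i1 pmax[OF j1] by (auto simp: S_def)
    have C0: "C \<ge> 0" unfolding C_def using Spos by (intro sum_nonneg) (simp add: less_imp_le)
    have pS: "(\<Sum>l\<in>S. p l) = 1"
      using ps by (subst sum.mono_neutral_left[of "{1..k}" S]) (auto simp: S_def)
    have qS: "(\<Sum>l\<in>S. q l) = 1"
      using qs False qnn by (subst sum.mono_neutral_left[of "{1..k}" S]) (force simp: S_def)+
    show ?thesis
    proof (cases "a - b = 0")
      case True thus ?thesis using chi C0 unfolding a_def[symmetric] b_def[symmetric] by (simp add: ediv_def)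
    next
      case False
      define c where "c = p j"
      define d where "d = a - c"
      define V where "V = a + c - d^2"
      define d0 where "d0 = a - b"
      define V0 where "V0 = a + b - d0^2"
      have d0pos: "d0 > 0" using False d0nn by (simp add: d0_def)
      have dd0: "d0 \<le> d" using jb by (simp add: d_def d0_def c_def)
      have "d \<le> 1" using a1 cpos by (simp add: d_def c_def)
      hence "d^2 \<le> d" using dd0 d0pos by (simp add: power2_eq_square mult_left_le)
      hence V2c: "V \<ge> 2 * c" by (simp add: V_def d_def)
      have VV0: "V \<le> V0"
      proof -
        have "d0^2 \<le> d^2" using dd0 d0pos by (intro power_mono) auto
        thus ?thesis using dd0 by (simp add: V_def V0_def d_def d0_def)
      qed
      have Vpos: "V > 0" using V2c cpos by (simp add: c_def)
      have V0pos: "V0 > 0" using VV0 Vpos by simp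
      define m where "m = d"
      define w where "w = (\<lambda>l. (if l = i then 1 else if l = j then -1 else 0) - m)"
      define \<mu> where "\<mu> = d0 / V0"
      have mu0: "\<mu> \<ge> 0" using d0pos V0pos by (simp add: \<mu>_def)
      have trm: "(q l - p l)^2 / p l \<ge> - 2 * \<mu> * ((q l - p l) * w l) - \<mu>^2 * (p l * (w l)^2)"
        if "l \<in> S" for l
      proof -
        have pl: "p l > 0" using Spos that by auto
        have "0 \<le> (q l - p l + \<mu> * p l * w l)^2 / p l" using pl by simp
        also have "\<dots> = (q l - p l)^2 / p l + 2 * \<mu> * ((q l - p l) * w l) + \<mu>^2 * (p l * (w l)^2)"
          using pl by (simp add: field_simps power2_eq_square)
        finally show ?thesis by simp
      qed
      have "C \<ge> (\<Sum>l\<in>S. - 2 * \<mu> * ((q l - p l) * w l) - \<mu>^2 * (p l * (w l)^2))"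
        unfolding C_def using trm by (intro sum_mono) auto
      also have "(\<Sum>l\<in>S. - 2 * \<mu> * ((q l - p l) * w l) - \<mu>^2 * (p l * (w l)^2))
          = - 2 * \<mu> * (\<Sum>l\<in>S. (q l - p l) * w l) - \<mu>^2 * (\<Sum>l\<in>S. p l * (w l)^2)"
        by (simp add: sum_subtractf sum_distrib_left)
      finally have C1: "C \<ge> - 2 * \<mu> * (\<Sum>l\<in>S. (q l - p l) * w l) - \<mu>^2 * (\<Sum>l\<in>S. p l * (w l)^2)" .
      have E1: "(\<Sum>l\<in>S. (q l - p l) * w l) = (q i - p i) - (q j - p j)"
      proof -
        have "(\<Sum>l\<in>S. (q l - p l) * w l) = (\<Sum>l\<in>S. (if l = i then q l - p l else 0))
             - (\<Sum>l\<in>S. (if l = j then q l - p l else 0)) - m * (\<Sum>l\<in>S. q l - p l)"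
        proof -
          have "(\<Sum>l\<in>S. (q l - p l) * w l) = (\<Sum>l\<in>S. (if l = i then q l - p l else 0)
             - (if l = j then q l - p l else 0) - m * (q l - p l))"
            unfolding w_def using ij by (intro sum.cong) (auto simp: algebra_simps)
          thus ?thesis by (simp add: sum_subtractf sum_distrib_left[symmetric])
        qed
        also have "\<dots> = (q i - p i) - (q j - p j)"
          using iS jS finS pS qS by (simp add: sum_subtractf)
        finally show ?thesis .
      qed
      have E2: "(\<Sum>l\<in>S. p l * (w l)^2) = V"
      proof -
        have "(\<Sum>l\<in>S. p l * (w l)^2) = (\<Sum>l\<in>S. (if l = i then p l * (1 - 2*m) else 0))
             + (\<Sum>l\<in>S. (if l = j then p l * (1 + 2*m) else 0)) + m^2 * (\<Sum>l\<in>S. p l)"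
        proof -
          have "(\<Sum>l\<in>S. p l * (w l)^2) = (\<Sum>l\<in>S. (if l = i then p l * (1 - 2*m) else 0)
             + (if l = j then p l * (1 + 2*m) else 0) + m^2 * p l)"
            unfolding w_def using ij by (intro sum.cong) (auto simp: algebra_simps power2_eq_square)
          thus ?thesis by (simp add: sum.distrib sum_distrib_left)
        qed
        also have "\<dots> = V"
          using iS jS finS pS by (simp add: V_def m_def d_def a c_def algebra_simps power2_eq_square)
        finally show ?thesis .
      qed
      have "q i \<le> q j" using qmax i1 by auto
      hence "(\<Sum>l\<in>S. (q l - p l) * w l) \<le> - d" using E1 by (simp add: d_def a c_def)
      hence "\<mu> * (\<Sum>l\<in>S. (q l - p l) * w l) \<le> \<mu> * (- d)" using mu0 by (rule mult_left_mono)
      hence "C \<ge> 2 * \<mu> * d - \<mu>^2 * V" using C1 E2 by simp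
      moreover have "2 * \<mu> * d - \<mu>^2 * V \<ge> 2 * \<mu> * d0 - \<mu>^2 * V0"
        using mu0 dd0 VV0 by (smt (verit) mult_left_mono zero_le_power2)
      moreover have "2 * \<mu> * d0 - \<mu>^2 * V0 = d0^2 / V0"
        using V0pos by (simp add: \<mu>_def field_simps power2_eq_square)
      ultimately have "C \<ge> d0^2 / V0" by linarith
      thus ?thesis using chi V0pos unfolding a_def[symmetric] b_def[symmetric]
        by (simp add: ediv_def d0_def[symmetric] V0_def[symmetric])
    qed
  qed
qed

end
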